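(* Let $V$ be a real vector space with two inner products $\langle\cdot,\cdot\rangle_1$ and $\langle\cdot,\cdot\rangle_2$, and let $\theta_0\in(0,\pi)$. Suppose that for all nonzero $x,y\in V$, the angle between $x$ and $y$ with respect to $\langle\cdot,\cdot\rangle_1$ is $\theta_0$ if and only if the angle between them with respect to $\langle\cdot,\cdot\rangle_2$ is $\theta_0$. Then there is $c>0$ such that $\langle x,y\rangle_2=c\langle x,y\rangle_1$ for all $x,y\in V$.
   Context: For an inner product $\langle\cdot,\cdot\rangle$ on a real vector space with norm $\|x\|=\sqrt{\langle x,x\rangle}$, the angle between nonzero vectors $x,y$ is the unique $\theta\in[0,\pi]$ with $\cos\theta=\langle x,y\rangle/(\|x\|\|y\|)$. *)

theory Defs
  imports "HOL-Analysis.Analysis"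
begin

definition is_inner_product :: "('a::real_vector \<Rightarrow> 'a \<Rightarrow> real) \<Rightarrow> bool" where
  "is_inner_product ip \<longleftrightarrow>
     (\<forall>x y. ip x y = ip y x) \<and>
     (\<forall>x y z. ip (x + y) z = ip x z + ip y z) \<and>
     (\<forall>r x y. ip (scaleR r x) y = r * ip x y) \<and>
     (\<forall>x. x \<noteq> 0 \<longrightarrow> ip x x > 0)"

definition ip_norm :: "('a \<Rightarrow> 'a \<Rightarrow> real) \<Rightarrow> 'a \<Rightarrow> real" where
  "ip_norm ip x = sqrt (ip x x)"

definition ip_angle :: "('a \<Rightarrow> 'a \<Rightarrow> real) \<Rightarrow> 'a \<Rightarrow> 'a \<Rightarrow> real" where
  "ip_angle ip x y = arccos (ip x y / (ip_norm ip x * ip_norm ip y))"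

end

theory Submission imports Defs begin

context
  fixes ip :: "'a::real_vector \<Rightarrow> 'a \<Rightarrow> real"
  assumes ip: "is_inner_product ip"
begin

lemma ip_sym: "ip x y = ip y x" using ip unfolding is_inner_product_def by blast
lemma ip_addL: "ip (x + y) z = ip x z + ip y z" using ip unfolding is_inner_product_def by blast
lemma ip_scL: "ip (scaleR r x) y = r * ip x y" using ip unfolding is_inner_product_def by blast
lemma ip_pos: "x \<noteq> 0 \<Longrightarrow> ip x x > 0" using ip unfolding is_inner_product_def by blast
lemma ip_addR: "ip z (x + y) = ip z x + ip z y" by (metis ip_sym ip_addL)
lemma ip_scR: "ip y (scaleR r x) = r * ip y x" by (metis ip_sym ip_scL)
lemma ip_zeroL: "ip 0 y = 0" using ip_scL[of 0 0 y] by simp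
lemma ip_nonneg: "ip x x \<ge> 0" using ip_pos[of x] ip_zeroL by (cases "x = 0") auto

lemma ip_expand: "ip (scaleR \<alpha> x + scaleR \<beta> y) (scaleR \<gamma> x + scaleR \<delta> y)
   = \<alpha>*\<gamma>*ip x x + (\<alpha>*\<delta> + \<beta>*\<gamma>) * ip x y + \<beta>*\<delta>*ip y y"
  by (simp add: ip_addL ip_addR ip_scL ip_scR ip_sym[of y x] algebra_simps)

lemma ip_CS: "(ip x y)^2 \<le> ip x x * ip y y"
proof (cases "y = 0")
  case True then show ?thesis using ip_zeroL ip_sym[of x 0] by simp
next
  case False
  define t where "t = ip x y / ip y y"
  have pos: "ip y y > 0" using ip_pos False by simp
  have "0 \<le> ip (scaleR 1 x + scaleR (-t) y) (scaleR 1 x + scaleR (-t) y)" by (rule ip_nonneg)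
  also have "\<dots> = ip x x - 2*t*ip x y + t^2 * ip y y" by (simp only: ip_expand) (simp add: power2_eq_square)
  also have "\<dots> = ip x x - (ip x y)^2 / ip y y" using pos by (simp add: t_def field_simps power2_eq_square)
  finally show ?thesis using pos by (simp add: field_simps)
qed

lemma ip_angle_iff:
  assumes "x \<noteq> 0" "y \<noteq> 0" "0 \<le> th" "th \<le> pi"
  shows "ip_angle ip x y = th \<longleftrightarrow> ip x y = cos th * ip_norm ip x * ip_norm ip y"
proof -
  have px: "ip_norm ip x > 0" "ip_norm ip y > 0" using ip_pos assms by (auto simp: ip_norm_def)
  define r where "r = ip x y / (ip_norm ip x * ip_norm ip y)"
  have "\<bar>ip x y\<bar> \<le> ip_norm ip x * ip_norm ip y"
  proof -
    have "\<bar>ip x y\<bar> = sqrt ((ip x y)^2)" by simp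
    also have "\<dots> \<le> sqrt (ip x x * ip y y)" using ip_CS real_sqrt_le_mono by blast
    finally show ?thesis by (simp add: ip_norm_def real_sqrt_mult)
  qed
  hence r: "-1 \<le> r" "r \<le> 1" using px by (auto simp: r_def divide_le_eq le_divide_eq abs_le_iff)
  have "ip_angle ip x y = th \<longleftrightarrow> r = cos th"
    unfolding ip_angle_def r_def[symmetric]
    using r assms cos_arccos arccos_cos by metis
  also have "\<dots> \<longleftrightarrow> ip x y = cos th * ip_norm ip x * ip_norm ip y"
    using px by (auto simp: r_def field_simps)
  finally show ?thesis .
qed

end

lemma main_aux:
  fixes ip1 ip2 :: "'a::real_vector \<Rightarrow> 'a \<Rightarrow> real" and a :: real
  assumes i1: "is_inner_product ip1" and i2: "is_inner_product ip2"
    and a: "a^2 < 1"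
    and H: "\<And>x y. x \<noteq> 0 \<Longrightarrow> y \<noteq> 0 \<Longrightarrow>
       (ip1 x y = a * sqrt (ip1 x x) * sqrt (ip1 y y) \<longleftrightarrow> ip2 x y = a * sqrt (ip2 x x) * sqrt (ip2 y y))"
  shows "\<exists>c>0. \<forall>x y. ip2 x y = c * ip1 x y"
proof -
  note e1 = ip_expand[OF i1] and e2 = ip_expand[OF i2]
  have q0: "ip1 0 0 = 0" "ip2 0 0 = 0" using ip_zeroL[OF i1] ip_zeroL[OF i2] by auto
  have L: "ip2 x x = ip2 y y \<and> ip2 x y = a * ip2 x x"
    if xy: "x \<noteq> 0" "y \<noteq> 0" "ip1 x x = ip1 y y" "ip1 x y = a * ip1 x x" for x y
  proof -
    have m: "ip1 x x > 0" using ip_pos[OF i1] xy by simp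
    have C1: "ip1 x y = a * sqrt (ip1 x x) * sqrt (ip1 y y)"
      using xy m by (simp add: real_sqrt_mult[symmetric])
    have C2: "ip2 x y = a * sqrt (ip2 x x) * sqrt (ip2 y y)" using H xy C1 by blast
    define P Q where "P = sqrt (ip2 x x)" and "Q = sqrt (ip2 y y)"
    have P: "P > 0" "P^2 = ip2 x x" using ip_pos[OF i2] xy ip_nonneg[OF i2] by (auto simp: P_def)
    have Q: "Q > 0" "Q^2 = ip2 y y" using ip_pos[OF i2] xy ip_nonneg[OF i2] by (auto simp: Q_def)
    have PQ: "P = Q"
    proof (cases "a = 0")
      case True
      have xyn: "scaleR 1 x + scaleR 1 y \<noteq> 0"
      proof
        assume "scaleR 1 x + scaleR 1 y = 0"
        hence "y = - x" by (simp add: eq_neg_iff_add_eq_0 add.commute)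
        hence "ip1 x y = - ip1 x x" using ip_scR[OF i1, of x "-1" x] by simp
        thus False using xy m True by simp
      qed
      have xyn2: "scaleR 1 x + scaleR (-1) y \<noteq> 0"
      proof
        assume "scaleR 1 x + scaleR (-1) y = 0"
        hence "y = x" by simp
        thus False using xy m True by simp
      qed
      have "ip1 (scaleR 1 x + scaleR 1 y) (scaleR 1 x + scaleR (-1) y) = 0"
        by (simp only: e1) (use xy in simp)
      hence "ip2 (scaleR 1 x + scaleR 1 y) (scaleR 1 x + scaleR (-1) y) = 0"
        using H[OF xyn xyn2] True by simp
      hence "ip2 x x = ip2 y y" by (simp only: e2) simp
      thus ?thesis using P Q by (simp add: P_def Q_def)
    next
      case False
      define y' where "y' = scaleR (2*a) x + scaleR (-1) y"
      have q1y': "ip1 y' y' = ip1 x x" unfolding y'_def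
        by (simp only: e1) (simp add: xy algebra_simps power2_eq_square)
      have y'n: "y' \<noteq> 0" using q1y' m q0 by auto
      have ip1y': "ip1 x y' = a * ip1 x x"
        using e1[of 1 x 0 y "2*a" "-1"] xy unfolding y'_def by (simp add: algebra_simps)
      have "ip1 x y' = a * sqrt (ip1 x x) * sqrt (ip1 y' y')"
        using ip1y' q1y' m by (simp add: real_sqrt_mult[symmetric])
      hence C2': "ip2 x y' = a * P * sqrt (ip2 y' y')" using H[OF xy(1) y'n] by (simp add: P_def)
      define R where "R = sqrt (ip2 y' y')"
      have R: "R^2 = ip2 y' y'" using ip_nonneg[OF i2] by (simp add: R_def)
      have "ip2 x y' = 2*a*ip2 x x - ip2 x y"
        using e2[of 1 x 0 y "2*a" "-1"] unfolding y'_def by (simp add: algebra_simps)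
      hence "a*P*R = 2*a*P^2 - a*P*Q" using C2' C2 P by (simp add: R_def P_def Q_def)
      hence "a*P*(R - (2*P - Q)) = 0" by (simp add: algebra_simps power2_eq_square)
      hence R2: "R = 2*P - Q" using False P by simp
      have "ip2 y' y' = 4*a^2*ip2 x x - 4*a*ip2 x y + ip2 y y"
        unfolding y'_def by (simp only: e2) (simp add: algebra_simps power2_eq_square)
      hence "(2*P-Q)^2 = 4*a^2*P^2 - 4*a*(a*P*Q) + Q^2" using R R2 P Q C2
        by (simp add: P_def Q_def)
      hence "4*(1-a^2)*P*(P-Q) = 0" by (simp add: algebra_simps power2_eq_square)
      thus ?thesis using a P by simp
    qed
    have "ip2 x x = ip2 y y" using P Q PQ by metis
    moreover have "ip2 x y = a * ip2 x x" using C2 PQ P by (simp add: P_def Q_def[symmetric] power2_eq_square)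
    ultimately show ?thesis by simp
  qed
  have R: "ip2 z z * ip1 x x = ip2 x x * ip1 z z" if xz: "x \<noteq> 0" "z \<noteq> 0" for x z
  proof -
    have m: "ip1 x x > 0" using ip_pos[OF i1] xz by simp
    define t where "t = ip1 x z / ip1 x x"
    define w where "w = z - scaleR t x"
    have zw: "z = scaleR t x + scaleR 1 w" by (simp add: w_def)
    have "ip1 (scaleR 0 z + scaleR 1 x) (scaleR 1 z + scaleR (-t) x) = ip1 z x - t * ip1 x x"
      by (simp only: e1) simp
    moreover have "w = scaleR 1 z + scaleR (-t) x" by (simp add: w_def)
    moreover have "t * ip1 x x = ip1 z x" using m by (simp add: t_def ip_sym[OF i1, of x z])
    ultimately have xw: "ip1 x w = 0" by simp
    show ?thesis
    proof (cases "w = 0")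
      case True
      have "z = scaleR t x + scaleR 0 x" using zw True by simp
      hence "ip1 z z = t*t*ip1 x x" "ip2 z z = t*t*ip2 x x"
        using e1[of t x 0 x t 0] e2[of t x 0 x t 0] by simp_all
      thus ?thesis by simp
    next
      case False
      have mw: "ip1 w w > 0" using ip_pos[OF i1] False by simp
      define b where "b = sqrt ((1-a^2) * ip1 x x / ip1 w w)"
      have b: "b > 0" "b^2 = (1-a^2) * ip1 x x / ip1 w w" using a m mw by (auto simp: b_def)
      define y where "y = scaleR a x + scaleR b w"
      have q1y: "ip1 y y = ip1 x x" unfolding y_def
        by (simp only: e1) (use b mw xw in \<open>simp add: power2_eq_square field_simps\<close>)
      have yn: "y \<noteq> 0" using q1y m q0 by auto
      have ixy: "ip1 x y = a * ip1 x x"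
        using e1[of 1 x 0 w a b] xw unfolding y_def by simp
      from L[OF xz(1) yn q1y[symmetric] ixy]
      have L2: "ip2 x x = ip2 y y" "ip2 x y = a * ip2 x x" by auto
      define k where "k = ip2 x x / ip1 x x"
      have k: "ip2 x x = k * ip1 x x" "ip2 y y = k * ip1 y y" "ip2 x y = k * ip1 x y"
        using m L2 q1y ixy by (simp_all add: k_def)
      have zxy: "z = scaleR (t - a/b) x + scaleR (1/b) y"
        using b unfolding zw y_def by (simp add: algebra_simps)
      have "ip2 z z = k * ip1 z z" unfolding zxy
        by (simp only: e1 e2 k) (simp add: algebra_simps)
      thus ?thesis using k by simp
    qed
  qed
  show ?thesis
  proof (cases "\<exists>e::'a. e \<noteq> 0")
    case False
    hence "\<forall>x::'a. x = 0" by blast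
    show ?thesis
    proof (intro exI[of _ 1] conjI allI)
      fix x y :: 'a
      have "x = 0" using \<open>\<forall>x::'a. x = 0\<close> by blast
      thus "ip2 x y = 1 * ip1 x y" using ip_zeroL[OF i1] ip_zeroL[OF i2] by simp
    qed simp
  next
    case True
    then obtain e :: 'a where e: "e \<noteq> 0" by blast
    define c where "c = ip2 e e / ip1 e e"
    have pe: "ip1 e e > 0" "ip2 e e > 0" using e ip_pos[OF i1] ip_pos[OF i2] by auto
    have qc: "ip2 x x = c * ip1 x x" for x
    proof (cases "x = 0")
      case True thus ?thesis using q0 by simp
    next
      case False
      from R[OF e False] pe show ?thesis by (simp add: c_def field_simps)
    qed
    have "ip2 x y = c * ip1 x y" for x y
    proof -
      have p1: "ip1 (scaleR 1 x + scaleR 1 y) (scaleR 1 x + scaleR 1 y) = ip1 x x + 2*ip1 x y + ip1 y y"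
        by (simp only: e1) simp
      have p2: "ip2 (scaleR 1 x + scaleR 1 y) (scaleR 1 x + scaleR 1 y) = ip2 x x + 2*ip2 x y + ip2 y y"
        by (simp only: e2) simp
      show ?thesis using p1 p2 qc[of x] qc[of y] qc[of "scaleR 1 x + scaleR 1 y"]
        by (simp add: algebra_simps)
    qed
    moreover have "c > 0" using pe by (simp add: c_def)
    ultimately show ?thesis by blast
  qed
qed

theorem mainTheorem5:
  fixes ip1 ip2 :: "'a::real_vector \<Rightarrow> 'a \<Rightarrow> real" and \<theta>0 :: real
  assumes "is_inner_product ip1" and "is_inner_product ip2"
    and "0 < \<theta>0" and "\<theta>0 < pi"
    and "\<And>x y. x \<noteq> 0 \<Longrightarrow> y \<noteq> 0 \<Longrightarrow>
            (ip_angle ip1 x y = \<theta>0 \<longleftrightarrow> ip_angle ip2 x y = \<theta>0)"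
  shows "\<exists>c>0. \<forall>x y. ip2 x y = c * ip1 x y"
proof (rule main_aux[OF assms(1,2), of "cos \<theta>0"])
  have "sin \<theta>0 > 0" using assms(3,4) sin_gt_zero by blast
  thus "(cos \<theta>0)^2 < 1" using sin_cos_squared_add[of \<theta>0]
    by (smt (verit) power2_eq_square mult_pos_pos)
next
  fix x y :: 'a assume xy: "x \<noteq> 0" "y \<noteq> 0"
  show "ip1 x y = cos \<theta>0 * sqrt (ip1 x x) * sqrt (ip1 y y) \<longleftrightarrow>
        ip2 x y = cos \<theta>0 * sqrt (ip2 x x) * sqrt (ip2 y y)"
  proof -
    have t: "0 \<le> \<theta>0" "\<theta>0 \<le> pi" using assms(3,4) by auto
    show ?thesis
    using ip_angle_iff[OF assms(1) xy t] ip_angle_iff[OF assms(2) xy t]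
      assms(5)[OF xy] unfolding ip_norm_def by blast
  qed
qed

end
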